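(* Let $n\ge 1$ and $m\ge 2$ be integers with $m\nmid n$, let $\ell=\lfloor n/m\rfloor$, and let $G_{n,m}=\{\theta_{m,0}+\sum_{k=1}^{\ell}a_k\theta_{m,k}: a_k\in\mathbb{F}_2\}$. If $f,g\in G_{n,m}$, then $f\circ g\in G_{n,m}$. In particular, $(G_{n,m},\circ)$ is a monoid.
   Context: For $x=(x_0,\dots,x_{n-1})\in\mathbb{F}_2^n$, indices of coordinates are taken modulo $n$. For a nonnegative integer $k$, the map $\theta_{m,k}\colon\mathbb{F}_2^n\to\mathbb{F}_2^n$ is defined by $\theta_{m,k}(x)=y$ with $y_i=x_{i+mk}\prod_{1\le j\le mk-1,\ m\nmid j}(x_{i+j}+1)$ for $i\in\{0,\dots,n-1\}$; $\theta_{m,0}$ is the identity map. Sums of maps are pointwise sums over $\mathbb{F}_2^n$, and $\circ$ denotes composition of maps. *)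

theory Defs
  imports Main "HOL-Library.Z2" "HOL-Algebra.Group"
begin

text \<open>Vectors of F_2^n are modelled as functions nat => bit; only the
  coordinates 0..n-1 are meaningful, indices are reduced modulo n.\<close>

definition theta :: "nat \<Rightarrow> nat \<Rightarrow> nat \<Rightarrow> (nat \<Rightarrow> bit) \<Rightarrow> (nat \<Rightarrow> bit)" where
  "theta n m k x =
     (if k = 0 then x
      else (\<lambda>i. if i < n then
                  x ((i + m * k) mod n) *
                  (\<Prod>j\<in>{j. 1 \<le> j \<and> j \<le> m * k - 1 \<and> \<not> m dvd j}. x ((i + j) mod n) + 1)
                else 0))"

definition G_elem :: "nat \<Rightarrow> nat \<Rightarrow> (nat \<Rightarrow> bit) \<Rightarrow> (nat \<Rightarrow> bit) \<Rightarrow> (nat \<Rightarrow> bit)" where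
  "G_elem n m a x = (\<lambda>i. theta n m 0 x i + (\<Sum>k\<in>{1..n div m}. a k * theta n m k x i))"

definition G :: "nat \<Rightarrow> nat \<Rightarrow> ((nat \<Rightarrow> bit) \<Rightarrow> (nat \<Rightarrow> bit)) set" where
  "G n m = {G_elem n m a | a. True}"

end

theory Submission imports "HOL-Computational_Algebra.Polynomial" Defs begin

declare add_bit_eq_xor[simp del] mult_bit_eq_and[simp del]

lemma bit_cases2: "(x::bit) = 0 \<or> x = 1" by auto

lemma bit_add_self[simp]: "(x::bit) + x = 0"
  using bit_cases2[of x] by auto

lemma prod_bit: "finite A \<Longrightarrow> (\<Prod>j\<in>A. f j) = (if \<forall>j\<in>A. f j = (1::bit) then 1 else 0)"
proof (induction A rule: finite_induct)
  case empty then show ?case by simp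
next
  case (insert a A) then show ?case using bit_cases2[of "f a"] by auto
qed

definition T :: "nat \<Rightarrow> nat \<Rightarrow> (nat \<Rightarrow> bit) \<Rightarrow> nat \<Rightarrow> bit" where
  "T m L X p = X (p + L) * (\<Prod>j\<in>{j. 1 \<le> j \<and> j \<le> L - 1 \<and> \<not> m dvd j}. X (p + j) + 1)"

lemma bit_plus1_eq1: "((x::bit) + 1 = 1) = (x = 0)"
  using bit_cases2[of x] by auto

lemma T_eq: "T m L X p = (if X (p+L) = 1 \<and> (\<forall>j. 0 < j \<and> j < L \<and> \<not> m dvd j \<longrightarrow> X (p+j) = 0) then 1 else 0)"
proof -
  have fin: "finite {j. 1 \<le> j \<and> j \<le> L - 1 \<and> \<not> m dvd j}"
    by (rule finite_subset[of _ "{..L}"]) auto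
  have e: "(\<forall>j\<in>{j. 1 \<le> j \<and> j \<le> L - 1 \<and> \<not> m dvd j}. X (p + j) + 1 = 1) =
        (\<forall>j. 0 < j \<and> j < L \<and> \<not> m dvd j \<longrightarrow> X (p+j) = 0)"
  proof (intro iffI allI impI ballI)
    fix j assume H: "\<forall>j\<in>{j. 1 \<le> j \<and> j \<le> L - 1 \<and> \<not> m dvd j}. X (p + j) + 1 = 1"
      and j: "0 < j \<and> j < L \<and> \<not> m dvd j"
    then have "j \<in> {j. 1 \<le> j \<and> j \<le> L - 1 \<and> \<not> m dvd j}" by auto
    then show "X (p+j) = 0" using H bit_plus1_eq1 by blast
  next
    fix j assume H: "\<forall>j. 0 < j \<and> j < L \<and> \<not> m dvd j \<longrightarrow> X (p+j) = 0"
      and j: "j \<in> {j. 1 \<le> j \<and> j \<le> L - 1 \<and> \<not> m dvd j}"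
    then have "0 < j \<and> j < L \<and> \<not> m dvd j" by auto
    then show "X (p + j) + 1 = 1" using H bit_plus1_eq1 by blast
  qed
  let ?C = "\<forall>j. 0 < j \<and> j < L \<and> \<not> m dvd j \<longrightarrow> X (p+j) = 0"
  have gen: "X (p + L) * (if c then 1 else 0) = (if X (p+L) = 1 \<and> c then 1 else 0)" for c
    using bit_cases2[of "X (p+L)"] by (cases c) auto
  have "X (p + L) * (if ?C then 1 else 0) = (if X (p+L) = 1 \<and> ?C then 1 else 0)"
    by (rule gen)
  then show ?thesis unfolding T_def prod_bit[OF fin] e .
qed

lemma T_one: "(T m L X p = 1) = (X (p+L) = 1 \<and> (\<forall>j. 0 < j \<and> j < L \<and> \<not> m dvd j \<longrightarrow> X (p+j) = 0))"
  by (simp add: T_eq)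

lemma T_zero: "(T m L X p = 0) = (\<not> (X (p+L) = 1 \<and> (\<forall>j. 0 < j \<and> j < L \<and> \<not> m dvd j \<longrightarrow> X (p+j) = 0)))"
  using T_eq[of m L X p] zero_neq_one by (metis (no_types, lifting))

lemma bit_sum1: "((a::bit) + b = 1) = ((a = 1) \<noteq> (b = 1))"
  using bit_cases2[of a] bit_cases2[of b] by auto

lemma key0:
  fixes X :: "nat \<Rightarrow> bit"
  assumes mK: "m dvd K" and mL: "m dvd L" and K0: "0 < K" and L0: "0 < L"
  defines "Z \<equiv> \<lambda>q. X q + T m L X q"
  shows "T m K Z 0 = T m K X 0 + T m (K+L) X 0"
proof (cases "\<forall>q. 0 < q \<and> q < K \<and> \<not> m dvd q \<longrightarrow> X q = 0")
  case A: True
  have TK: "T m K X 0 = X K"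
    using A bit_cases2[of "X K"] by (auto simp: T_eq)
  have TKL: "T m L X K = T m (K+L) X 0"
  proof -
    have "(\<forall>j. 0 < j \<and> j < L \<and> \<not> m dvd j \<longrightarrow> X (K+j) = 0) =
          (\<forall>j. 0 < j \<and> j < K + L \<and> \<not> m dvd j \<longrightarrow> X j = 0)"
    proof
      assume H: "\<forall>j. 0 < j \<and> j < L \<and> \<not> m dvd j \<longrightarrow> X (K+j) = 0"
      show "\<forall>j. 0 < j \<and> j < K + L \<and> \<not> m dvd j \<longrightarrow> X j = 0"
      proof (intro allI impI)
        fix j assume j: "0 < j \<and> j < K + L \<and> \<not> m dvd j"
        show "X j = 0"
        proof (cases "j < K")
          case True then show ?thesis using A j by auto
        next
          case False
          then have "j \<noteq> K" using j mK by auto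
          with False have "K < j" by auto
          moreover have "\<not> m dvd (j - K)"
            using j mK \<open>K < j\<close> by (metis dvd_add_right_iff le_add_diff_inverse less_imp_le)
          ultimately show ?thesis using H[rule_format, of "j - K"] j by auto
        qed
      qed
    next
      assume H: "\<forall>j. 0 < j \<and> j < K + L \<and> \<not> m dvd j \<longrightarrow> X j = 0"
      show "\<forall>j. 0 < j \<and> j < L \<and> \<not> m dvd j \<longrightarrow> X (K+j) = 0"
        using H mK by (metis add_less_cancel_left dvd_add_right_iff add_pos_pos K0)
    qed
    then show ?thesis by (simp add: T_eq add.commute)
  qed
  have ZK: "Z K = X K + T m (K+L) X 0" using TKL by (simp add: Z_def)
  have claim: "Z q = 0" if ZK1: "Z K = 1" and q: "0 < q" "q < K" "\<not> m dvd q" for q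
  proof -
    have Xq: "X q = 0" using A q by auto
    have "T m L X q = 0"
    proof (rule ccontr)
      assume "T m L X q \<noteq> 0"
      then have T1: "X (q+L) = 1" "\<forall>j. 0 < j \<and> j < L \<and> \<not> m dvd j \<longrightarrow> X (q+j) = 0"
        by (auto simp: T_eq split: if_splits)
      have nd: "\<not> m dvd (q+L)" using q(3) mL by (simp add: dvd_add_left_iff)
      have "q + L \<noteq> K" using nd mK by auto
      show False
      proof (cases "q + L < K")
        case True then show False using A nd T1(1) q(1) by force
      next
        case False
        with \<open>q + L \<noteq> K\<close> have gt: "K < q + L" by auto
        show False
        proof (cases "X K = 1")
          case True
          have "\<not> m dvd (K - q)"
            using q mK by (metis dvd_diff_nat diff_diff_cancel less_imp_le)
          then have "X (q + (K - q)) = 0" using T1(2)[rule_format, of "K - q"] q gt by auto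
          then show False using True q by simp
        next
          case False
          then have "T m (K+L) X 0 = 1" using ZK ZK1 bit_sum1 by metis
          then have "X (q+L) = 0" using nd gt q by (auto simp: T_eq split: if_splits)
          then show False using T1 by simp
        qed
      qed
    qed
    then show ?thesis using Xq by (simp add: Z_def)
  qed
  have "T m K Z 0 = Z K"
  proof (cases "Z K = 1")
    case True then show ?thesis using claim by (simp add: T_eq)
  next
    case False then show ?thesis using bit_cases2[of "Z K"] by (simp add: T_eq)
  qed
  then show ?thesis using ZK TK by simp
next
  case False
  then obtain N where N: "0 < N" "N < K" "\<not> m dvd N" "X N = 1" using bit_cases2 by blast
  have T1: "T m K X 0 = 0" using N by (auto simp: T_eq)
  have T2: "T m (K+L) X 0 = 0" using N by (auto simp: T_eq)
  have "T m K Z 0 = 0"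
  proof (rule ccontr)
    assume "T m K Z 0 \<noteq> 0"
    then have Z1: "Z K = 1" and Z0: "\<forall>j. 0 < j \<and> j < K \<and> \<not> m dvd j \<longrightarrow> Z j = 0"
      by (auto simp: T_eq split: if_splits)
    have inv: "N + t*L < K + L \<longrightarrow> X (N + t*L) = 1 \<and> (\<forall>j. 0 < j \<and> j < t*L \<and> \<not> m dvd j \<longrightarrow> X (N+j) = 0)" for t
    proof (induction t)
      case 0 then show ?case using N by simp
    next
      case (Suc t)
      show ?case
      proof
        assume lt: "N + Suc t * L < K + L"
        then have lt2: "N + t*L < K" by simp
        with Suc have IH: "X (N + t*L) = 1" "\<forall>j. 0 < j \<and> j < t*L \<and> \<not> m dvd j \<longrightarrow> X (N+j) = 0" by auto
        have mtL: "m dvd t*L" using mL by simp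
        have nd: "\<not> m dvd (N + t*L)" using N(3) mtL by (simp add: dvd_add_left_iff)
        have "Z (N + t*L) = 0" using Z0 lt2 nd N by auto
        then have "T m L X (N + t*L) = 1" using IH(1) bit_sum1[of "X (N+t*L)" "T m L X (N+t*L)"]
          by (auto simp: Z_def)
        then have S: "X (N + t*L + L) = 1" "\<forall>j. 0 < j \<and> j < L \<and> \<not> m dvd j \<longrightarrow> X (N + t*L + j) = 0"
          by (auto simp: T_eq split: if_splits)
        have "\<forall>j. 0 < j \<and> j < Suc t * L \<and> \<not> m dvd j \<longrightarrow> X (N+j) = 0"
        proof (intro allI impI)
          fix j assume j: "0 < j \<and> j < Suc t * L \<and> \<not> m dvd j"
          show "X (N+j) = 0"
          proof (cases "j < t*L")
            case True then show ?thesis using IH j by auto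
          next
            case False
            then have "j \<noteq> t*L" using j mtL by auto
            with False have gt: "t*L < j" by auto
            have "\<not> m dvd (j - t*L)"
              using j mtL gt by (metis dvd_add_right_iff le_add_diff_inverse less_imp_le)
            then have "X (N + t*L + (j - t*L)) = 0" using S(2)[rule_format, of "j - t*L"] gt j by auto
            then show ?thesis using gt by simp
          qed
        qed
        then show "X (N + Suc t * L) = 1 \<and> (\<forall>j. 0 < j \<and> j < Suc t * L \<and> \<not> m dvd j \<longrightarrow> X (N+j) = 0)"
        proof -
          have "X (N + Suc t * L) = X (N + t*L + L)" by (simp add: algebra_simps)
          then show ?thesis using S(1) \<open>\<forall>j. 0 < j \<and> j < Suc t * L \<and> \<not> m dvd j \<longrightarrow> X (N+j) = 0\<close> by simp
        qed
      qed
    qed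
    define d where "d = (K - N) div L"
    have dm: "d * L + (K - N) mod L = K - N" unfolding d_def by (rule div_mult_mod_eq)
    have ml: "(K - N) mod L < L" using L0 by simp
    have d1: "d * L \<le> K - N" using dm by linarith
    have d2: "K - N < (d+1) * L" using dm ml by (simp add: distrib_right)
    have "N + d * L \<noteq> K"
    proof
      assume "N + d*L = K"
      then have "m dvd N + d*L" using mK by simp
      then show False using N(3) mL by (simp add: dvd_add_left_iff)
    qed
    then have lt: "N + d*L < K" using d1 N by linarith
    define t where "t = d + 1"
    have tlt: "N + t*L < K + L" using lt by (simp add: t_def)
    have tgt: "K < N + t*L" using d2 N by (simp add: t_def)
    from inv[of t] tlt have I: "X (N + t*L) = 1" "\<forall>j. 0 < j \<and> j < t*L \<and> \<not> m dvd j \<longrightarrow> X (N+j) = 0" by auto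
    have "\<not> m dvd (K - N)" using N mK by (metis dvd_diff_nat diff_diff_cancel less_imp_le)
    then have XK: "X K = 0" using I(2)[rule_format, of "K - N"] N tgt by auto
    have mtL: "m dvd t*L" using mL by simp
    have nd2: "\<not> m dvd (N + t*L - K)"
    proof
      assume "m dvd (N + t*L - K)"
      then have "m dvd (N + t*L - K) + K" using mK by simp
      then have "m dvd N + t*L" using tgt by simp
      then show False using N(3) mtL by (simp add: dvd_add_left_iff)
    qed
    have "T m L X K = 0"
      unfolding T_zero
    proof
      assume H: "X (K + L) = 1 \<and> (\<forall>j. 0 < j \<and> j < L \<and> \<not> m dvd j \<longrightarrow> X (K + j) = 0)"
      have "X (K + (N + t*L - K)) = 0" using H[THEN conjunct2, rule_format, of "N + t*L - K"] nd2 tgt tlt by auto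
      then show False using I(1) tgt by simp
    qed
    then have "Z K = 0" using XK by (simp add: Z_def)
    then show False using Z1 by simp
  qed
  then show ?thesis using T1 T2 by simp
qed

lemma T_shift: "T m L X (p + q) = T m L (\<lambda>r. X (p + r)) q"
  by (simp add: T_def add.assoc)

lemma key:
  fixes X :: "nat \<Rightarrow> bit"
  assumes "m dvd K" and "m dvd L" and "0 < K" and "0 < L"
  shows "T m K (\<lambda>q. X q + T m L X q) p = T m K X p + T m (K+L) X p"
proof -
  define Y where "Y = (\<lambda>r. X (p + r))"
  have "T m K (\<lambda>q. X q + T m L X q) p = T m K (\<lambda>q. X q + T m L X q) (p + 0)" by simp
  also have "\<dots> = T m K (\<lambda>r. Y r + T m L Y r) 0"
    unfolding T_shift Y_def by (simp add: T_shift[symmetric])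
  also have "\<dots> = T m K Y 0 + T m (K+L) Y 0"
    using key0[OF assms] by simp
  also have "\<dots> = T m K X p + T m (K+L) X p"
    using T_shift[of m K X p 0] T_shift[of m "K+L" X p 0] by (simp add: Y_def)
  finally show ?thesis .
qed

definition periodic :: "nat \<Rightarrow> (nat \<Rightarrow> bit) \<Rightarrow> bool" where
  "periodic n X \<longleftrightarrow> (\<forall>q. X (q mod n) = X q)"

lemma periodic_shift: "periodic n X \<Longrightarrow> X (q mod n + a) = X (q + a)"
  unfolding periodic_def by (metis mod_add_left_eq)

lemma T_periodic: "periodic n X \<Longrightarrow> periodic n (T m L X)"
  unfolding periodic_def
proof (intro allI)
  fix q assume P: "\<forall>q. X (q mod n) = X q"
  then have "periodic n X" by (simp add: periodic_def)
  then show "T m L X (q mod n) = T m L X q"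
    unfolding T_def by (simp add: periodic_shift)
qed

lemma T_vanish:
  assumes "0 < n" "\<not> m dvd n" "m dvd M" "n < M" "periodic n X"
  shows "T m M X p = 0"
  unfolding T_zero
proof
  assume H: "X (p + M) = 1 \<and> (\<forall>j. 0 < j \<and> j < M \<and> \<not> m dvd j \<longrightarrow> X (p + j) = 0)"
  have nd: "\<not> m dvd (M - n)"
    using assms by (metis dvd_diff_nat diff_diff_cancel less_imp_le)
  have "X (p + (M - n)) = 0" using H[THEN conjunct2, rule_format, of "M - n"] nd assms by auto
  moreover have "X (p + M) = X (p + (M - n))"
  proof -
    have "X (p + M) = X ((p + (M - n) + n) mod n)"
      using assms(4) periodic_def[of n X] assms(5) by (metis le_add_diff_inverse2 less_imp_le add.assoc)
    also have "\<dots> = X ((p + (M - n)) mod n)" by simp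
    also have "\<dots> = X (p + (M - n))" using assms(5) by (simp add: periodic_def)
    finally show ?thesis .
  qed
  ultimately show False using H by simp
qed

definition Ep :: "nat \<Rightarrow> nat \<Rightarrow> bit poly \<Rightarrow> (nat \<Rightarrow> bit) \<Rightarrow> nat \<Rightarrow> bit" where
  "Ep n m p X = (\<lambda>q. X q + (\<Sum>k\<in>{1..n div m}. coeff p k * T m (m*k) X q))"

lemma Ep_periodic: "periodic n X \<Longrightarrow> periodic n (Ep n m p X)"
  using T_periodic unfolding Ep_def periodic_def by simp

lemma Ep_cong: "(\<And>k. 1 \<le> k \<Longrightarrow> k \<le> n div m \<Longrightarrow> coeff p k = coeff p' k) \<Longrightarrow> Ep n m p = Ep n m p'"
  unfolding Ep_def by (intro ext arg_cong2[where f="(+)"] refl sum.cong) auto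

lemma E1:
  assumes "1 \<le> l" "l \<le> n div m"
  shows "Ep n m (1 + monom 1 l) X = (\<lambda>q. X q + T m (m*l) X q)"
proof -
  have "(\<Sum>k\<in>{1..n div m}. coeff (1 + monom 1 l) k * T m (m*k) X q) = T m (m*l) X q" for q
  proof -
    have "(\<Sum>k\<in>{1..n div m}. coeff (1 + monom 1 l) k * T m (m*k) X q)
        = (\<Sum>k\<in>{1..n div m}. if k = l then T m (m*k) X q else 0)"
      by (intro sum.cong refl) auto
    also have "\<dots> = T m (m*l) X q" using assms by simp
    finally show ?thesis .
  qed
  then show ?thesis unfolding Ep_def by simp
qed

lemma bitpoly_add_self[simp]: "(p::bit poly) + p = 0"
  by (rule poly_eqI) (simp only: coeff_add bit_add_self coeff_0)

lemma two_bitpoly[simp]: "(2::bit poly) = 0"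
  using bitpoly_add_self[of 1] by (simp only: one_add_one)

lemma tele: "(\<Sum>i<N. monom (1::bit) (i*l)) * (1 + monom 1 l) = 1 + monom 1 (N*l)"
proof (induction N)
  case 0 then show ?case by (simp add: monom_0 one_pCons[symmetric])
next
  case (Suc N)
  have "(\<Sum>i<Suc N. monom (1::bit) (i*l)) * (1 + monom 1 l)
      = (\<Sum>i<N. monom (1::bit) (i*l)) * (1 + monom 1 l) + monom 1 (N*l) * (1 + monom 1 l)"
    by (simp add: distrib_right)
  also have "\<dots> = 1 + (monom 1 (N*l) + monom 1 (N*l)) + monom 1 (Suc N * l)"
    unfolding Suc by (simp add: distrib_left mult_monom algebra_simps)
  finally show ?case by simp
qed

context
  fixes n m :: nat
  assumes n1: "n \<ge> 1" and m2: "m \<ge> 2" and nd: "\<not> m dvd n"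
begin

lemma n_lt: "n < m * (n div m + 1)"
proof -
  have e: "m * (n div m) + n mod m = n" by (rule mult_div_mod_eq)
  have "n mod m < m" using m2 by simp
  moreover have "m * (n div m + 1) = m * (n div m) + m" by simp
  ultimately show ?thesis using e by linarith
qed

lemma S1:
  assumes P: "periodic n X" and l: "1 \<le> l" "l \<le> n div m" and p0: "coeff p 0 = 1"
  shows "Ep n m p (Ep n m (1 + monom 1 l) X) = Ep n m (p * (1 + monom 1 l)) X"
proof (rule ext)
  fix q
  let ?l = "n div m"
  define Y where "Y = (\<lambda>q. X q + T m (m*l) X q)"
  have EY: "Ep n m (1 + monom 1 l) X = Y" using E1[OF l] by (simp add: Y_def)
  have TY: "T m (m*k) Y q = T m (m*k) X q + T m (m*(k+l)) X q" if "1 \<le> k" for k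
    using key[of m "m*k" "m*l" X q] that l m2 by (simp add: Y_def distrib_left)
  define f where "f k = coeff p k * T m (m*(k+l)) X q" for k
  have A: "(\<Sum>k\<in>{1..?l}. f k) = (\<Sum>k\<in>{1..?l - l}. f k)"
  proof (rule sum.mono_neutral_right)
    show "\<forall>k\<in>{1..?l} - {1..?l - l}. f k = 0"
    proof
      fix k assume k: "k \<in> {1..?l} - {1..?l - l}"
      then have "?l + 1 \<le> k + l" by auto
      then have "m * (?l + 1) \<le> m * (k + l)" by (rule mult_le_mono2)
      then have "n < m * (k + l)" using n_lt by linarith
      then have "T m (m*(k+l)) X q = 0" using T_vanish[of n m "m*(k+l)" X q] n1 nd P by simp
      then show "f k = 0" by (simp add: f_def)
    qed
  qed auto
  have B: "(\<Sum>k\<in>{1..?l}. (if k < l then 0 else coeff p (k - l)) * T m (m*k) X q)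
      = T m (m*l) X q + (\<Sum>k\<in>{1..?l - l}. f k)"
  proof -
    have "(\<Sum>k\<in>{1..?l}. (if k < l then 0 else coeff p (k - l)) * T m (m*k) X q)
        = (\<Sum>k\<in>{l..?l}. coeff p (k - l) * T m (m*k) X q)"
    proof (rule sum.mono_neutral_cong_right)
      show "{l..?l} \<subseteq> {1..?l}" using l by auto
    qed auto
    also have "\<dots> = (\<Sum>k\<in>{0 + l..(?l - l) + l}. coeff p (k - l) * T m (m*k) X q)"
      using l by simp
    also have "\<dots> = (\<Sum>k\<in>{0..?l - l}. f k)"
      unfolding sum.shift_bounds_cl_nat_ivl f_def by simp
    also have "\<dots> = f 0 + (\<Sum>k\<in>{Suc 0..?l - l}. f k)"
      by (rule sum.atLeast_Suc_atMost) simp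
    also have "\<dots> = T m (m*l) X q + (\<Sum>k\<in>{1..?l - l}. f k)"
      by (simp add: f_def p0)
    finally show ?thesis .
  qed
  have L: "Ep n m p Y q = X q + T m (m*l) X q + (\<Sum>k\<in>{1..?l}. coeff p k * T m (m*k) X q)
             + (\<Sum>k\<in>{1..?l}. f k)"
  proof -
    have "(\<Sum>k\<in>{1..?l}. coeff p k * T m (m*k) Y q)
        = (\<Sum>k\<in>{1..?l}. coeff p k * T m (m*k) X q + f k)"
      by (intro sum.cong refl) (simp add: TY f_def distrib_left)
    then show ?thesis unfolding Ep_def Y_def by (simp add: sum.distrib algebra_simps)
  qed
  have R: "Ep n m (p * (1 + monom 1 l)) X q = X q + (\<Sum>k\<in>{1..?l}. coeff p k * T m (m*k) X q)
      + (\<Sum>k\<in>{1..?l}. (if k < l then 0 else coeff p (k - l)) * T m (m*k) X q)"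
  proof -
    have c: "coeff (p * (1 + monom 1 l)) k = coeff p k + (if k < l then 0 else coeff p (k - l))" for k
      by (simp add: distrib_left mult.commute[of p "monom 1 l"] coeff_monom_mult)
    show ?thesis unfolding Ep_def c by (simp add: distrib_right sum.distrib algebra_simps)
  qed
  show "Ep n m p (Ep n m (1 + monom 1 l) X) q = Ep n m (p * (1 + monom 1 l)) X q"
    unfolding EY L R B A by (simp add: algebra_simps)
qed


lemma base_case:
  assumes q0: "coeff q 0 = 1" and qz: "\<And>j. 1 \<le> j \<Longrightarrow> j \<le> n div m \<Longrightarrow> coeff q j = 0"
  shows "Ep n m p (Ep n m q X) = Ep n m (p*q) X"
proof -
  have "Ep n m q X = X" unfolding Ep_def using qz by (simp add: sum.neutral)
  moreover have "Ep n m (p*q) = Ep n m p"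
  proof (rule Ep_cong)
    fix k assume k: "1 \<le> k" "k \<le> n div m"
    have "coeff (p*q) k = coeff p k * coeff q (k - k) + (\<Sum>i\<in>{..k} - {k}. coeff p i * coeff q (k - i))"
      unfolding coeff_mult by (rule sum.remove) auto
    also have "(\<Sum>i\<in>{..k} - {k}. coeff p i * coeff q (k - i)) = 0"
      using k qz by (intro sum.neutral) auto
    finally show "coeff (p*q) k = coeff p k" using q0 by simp
  qed
  ultimately show ?thesis by simp
qed



lemma Ep_mult_aux:
  "\<forall>q. coeff q 0 = 1 \<longrightarrow> (\<forall>j. 1 \<le> j \<and> j + d \<le> n div m \<longrightarrow> coeff q j = 0) \<longrightarrow>
     (\<forall>p X. coeff p 0 = 1 \<longrightarrow> periodic n X \<longrightarrow> Ep n m p (Ep n m q X) = Ep n m (p*q) X)"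
proof (induction d)
  case 0
  then show ?case using base_case by auto
next
  case (Suc d)
  let ?l = "n div m"
  show ?case
  proof (intro allI impI)
    fix q p :: "bit poly" and X :: "nat \<Rightarrow> bit"
    assume q0: "coeff q 0 = 1" and qz: "\<forall>j. 1 \<le> j \<and> j + Suc d \<le> ?l \<longrightarrow> coeff q j = 0"
      and p0: "coeff p 0 = 1" and P: "periodic n X"
    show "Ep n m p (Ep n m q X) = Ep n m (p*q) X"
    proof (cases "d \<ge> ?l \<or> coeff q (?l - d) = 0")
      case True
      then have "\<forall>j. 1 \<le> j \<and> j + d \<le> ?l \<longrightarrow> coeff q j = 0"
      proof (intro allI impI)
        fix j assume j: "1 \<le> j \<and> j + d \<le> ?l"
        show "coeff q j = 0"
        proof (cases "j + Suc d \<le> ?l")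
          case True then show ?thesis using qz j by auto
        next
          case False
          then have "j = ?l - d" "\<not> d \<ge> ?l" using j by auto
          then show ?thesis using \<open>d \<ge> ?l \<or> coeff q (?l - d) = 0\<close> by simp
        qed
      qed
      then show ?thesis using Suc.IH q0 p0 P by blast
    next
      case False
      define l where "l = ?l - d"
      have l1: "1 \<le> l" "l \<le> ?l" using False by (auto simp: l_def)
      have ql: "coeff q l = 1" using False bit_cases2 by (auto simp: l_def)
      have qz': "coeff q j = 0" if "1 \<le> j" "j < l" for j using qz that by (auto simp: l_def)
      define u where "u = q - 1 - monom 1 l"
      have uz: "coeff u j = 0" if jl: "j \<le> l" for j
      proof -
        consider "j = 0" | "1 \<le> j \<and> j < l" | "j = l" using jl l1 by (cases "j = 0"; cases "j = l") auto
        then show ?thesis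
        proof cases
          case 1 then show ?thesis using q0 l1 by (simp add: u_def)
        next
          case 2 then show ?thesis using qz'[of j] by (simp add: u_def)
        next
          case 3 then show ?thesis using ql l1 by (simp add: u_def)
        qed
      qed
      define M where "M = (?l + 1) * l"
      have M: "?l < M"
      proof -
        have "?l * 1 \<le> ?l * l" using l1 by (intro mult_le_mono2) simp
        moreover have "M = l + ?l * l" by (simp add: M_def)
        ultimately show ?thesis using l1 by linarith
      qed
      define r where "r = (\<Sum>i<?l+1. monom (1::bit) (i*l))"
      define q' where "q' = 1 + u * r"
      have ur: "coeff (u*r) j = 0" if "j \<le> l" for j
        unfolding coeff_mult using uz that by (intro sum.neutral) auto
      have q'0: "coeff q' 0 = 1" using ur[of 0] by (simp add: q'_def)
      have q'z: "\<forall>j. 1 \<le> j \<and> j + d \<le> ?l \<longrightarrow> coeff q' j = 0"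
        using ur by (auto simp: q'_def l_def)
      have qu: "q = u + 1 + monom 1 l" by (simp add: u_def)
      have prod: "q' * (1 + monom 1 l) = q + u * monom 1 M"
      proof -
        have "q' * (1 + monom 1 l) = (1 + monom 1 l) + u * (r * (1 + monom 1 l))"
          by (simp add: q'_def algebra_simps)
        also have "r * (1 + monom 1 l) = 1 + monom 1 M" unfolding r_def M_def by (rule tele)
        finally show ?thesis by (simp add: qu algebra_simps)
      qed
      have small: "coeff (a * monom 1 M) k = 0" if "k \<le> ?l" for a :: "bit poly" and k
        using M that by (simp add: mult.commute[of a] coeff_monom_mult)
      define Y where "Y = Ep n m (1 + monom 1 l) X"
      have PY: "periodic n Y" unfolding Y_def using P by (rule Ep_periodic)
      have "Ep n m q X = Ep n m (q' * (1 + monom 1 l)) X"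
        by (rule fun_cong[OF Ep_cong]) (simp add: prod small)
      also have "\<dots> = Ep n m q' Y" unfolding Y_def using S1[OF P l1 q'0] by simp
      finally have e1: "Ep n m q X = Ep n m q' Y" .
      have "Ep n m p (Ep n m q X) = Ep n m (p * q') Y"
        unfolding e1 using Suc.IH q'0 q'z p0 PY by blast
      also have "\<dots> = Ep n m (p * q' * (1 + monom 1 l)) X"
        unfolding Y_def by (rule S1[OF P l1]) (simp add: coeff_mult_0 p0 q'0)
      also have "\<dots> = Ep n m (p*q) X"
      proof (rule fun_cong[OF Ep_cong])
        fix k assume "1 \<le> k" "k \<le> ?l"
        have "p * q' * (1 + monom 1 l) = p * (q' * (1 + monom 1 l))" by (rule mult.assoc)
        also have "\<dots> = p * (q + u * monom 1 M)" by (simp only: prod)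
        also have "\<dots> = p * q + (p * u) * monom 1 M" by (simp add: distrib_left mult.assoc)
        finally show "coeff (p * q' * (1 + monom 1 l)) k = coeff (p*q) k"
          using small[OF \<open>k \<le> ?l\<close>, of "p*u"] by simp
      qed
      finally show ?thesis .
    qed
  qed
qed

lemma Ep_mult:
  assumes "coeff p 0 = 1" "coeff q 0 = 1" "periodic n X"
  shows "Ep n m p (Ep n m q X) = Ep n m (p*q) X"
  using Ep_mult_aux[of "n div m"] assms by auto


definition per :: "nat \<Rightarrow> (nat \<Rightarrow> bit) \<Rightarrow> nat \<Rightarrow> bit" where
  "per N x = (\<lambda>q. x (q mod N))"

definition polyof :: "nat \<Rightarrow> nat \<Rightarrow> (nat \<Rightarrow> bit) \<Rightarrow> bit poly" where
  "polyof N M a = 1 + (\<Sum>k\<in>{1..N div M}. monom (a k) k)"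

lemma per_periodic: "periodic n (per n x)"
  by (simp add: periodic_def per_def)

lemma coeff_polyof0: "coeff (polyof n m a) 0 = 1"
  unfolding polyof_def by (simp add: coeff_sum)

lemma coeff_polyof: "1 \<le> k \<Longrightarrow> k \<le> n div m \<Longrightarrow> coeff (polyof n m a) k = a k"
  unfolding polyof_def by (simp add: coeff_sum)

lemma theta_T: "1 \<le> k \<Longrightarrow> i < n \<Longrightarrow> theta n m k x i = T m (m*k) (per n x) i"
  unfolding theta_def T_def per_def by simp

lemma Gel: "G_elem n m a x = (\<lambda>i. if i < n then Ep n m (polyof n m a) (per n x) i else x i)"
proof (rule ext)
  fix i
  show "G_elem n m a x i = (if i < n then Ep n m (polyof n m a) (per n x) i else x i)"
  proof (cases "i < n")
    case True
    have "(\<Sum>k\<in>{1..n div m}. a k * theta n m k x i) =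
          (\<Sum>k\<in>{1..n div m}. coeff (polyof n m a) k * T m (m*k) (per n x) i)"
      using True by (intro sum.cong refl) (simp add: theta_T coeff_polyof)
    moreover have "theta n m 0 x i = per n x i" using True by (simp add: theta_def per_def)
    ultimately show ?thesis using True unfolding G_elem_def Ep_def by simp
  next
    case False
    then have "(\<Sum>k\<in>{1..n div m}. a k * theta n m k x i) = 0"
      by (intro sum.neutral) (simp add: theta_def)
    then show ?thesis using False unfolding G_elem_def by (simp add: theta_def)
  qed
qed

lemma per_Gel: "per n (G_elem n m a x) = Ep n m (polyof n m a) (per n x)"
proof (rule ext)
  fix q
  have "q mod n < n" using n1 by simp
  then have "per n (G_elem n m a x) q = Ep n m (polyof n m a) (per n x) (q mod n)"
    by (simp add: per_def Gel)
  also have "\<dots> = Ep n m (polyof n m a) (per n x) q"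
    using Ep_periodic[OF per_periodic] by (simp add: periodic_def)
  finally show "per n (G_elem n m a x) q = Ep n m (polyof n m a) (per n x) q" .
qed

lemma Gel_comp: "G_elem n m a \<circ> G_elem n m b = G_elem n m (\<lambda>k. coeff (polyof n m a * polyof n m b) k)"
proof (rule ext)+
  fix x i
  let ?c = "\<lambda>k. coeff (polyof n m a * polyof n m b) k"
  have E: "Ep n m (polyof n m ?c) = Ep n m (polyof n m a * polyof n m b)"
    by (rule Ep_cong) (simp add: coeff_polyof)
  show "(G_elem n m a \<circ> G_elem n m b) x i = G_elem n m ?c x i"
  proof (cases "i < n")
    case True
    have "(G_elem n m a \<circ> G_elem n m b) x i = Ep n m (polyof n m a) (Ep n m (polyof n m b) (per n x)) i"
      using True by (simp add: Gel[of a "G_elem n m b x"] per_Gel)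
    also have "\<dots> = Ep n m (polyof n m a * polyof n m b) (per n x) i"
      by (simp add: Ep_mult coeff_polyof0 per_periodic)
    finally show ?thesis using True by (simp add: Gel[of ?c] E)
  next
    case False
    then show ?thesis by (simp add: Gel)
  qed
qed

lemma Gel_id: "G_elem n m (\<lambda>_. 0) = id"
  by (rule ext)+ (simp add: G_elem_def theta_def)

end

theorem theorem1:
  fixes n m :: nat
  assumes "n \<ge> 1" and "m \<ge> 2" and "\<not> m dvd n"
  shows "(\<forall>f\<in>G n m. \<forall>g\<in>G n m. f \<circ> g \<in> G n m)
         \<and> monoid \<lparr>carrier = G n m, mult = (\<circ>), one = id\<rparr>"
proof -
  have cl: "\<forall>f\<in>G n m. \<forall>g\<in>G n m. f \<circ> g \<in> G n m"
    unfolding G_def using Gel_comp[OF assms] by blast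
  have idG: "id \<in> G n m"
    unfolding G_def using Gel_id[OF assms] by (metis (mono_tags, lifting) mem_Collect_eq)
  have "monoid \<lparr>carrier = G n m, mult = (\<circ>), one = id\<rparr>"
    by (unfold_locales) (use cl idG in \<open>auto simp: comp_assoc\<close>)
  with cl show ?thesis by blast
qed

end
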